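(* Let $\mathfrak n=W\oplus\mathfrak z$ be a finite-dimensional 2-step nilpotent Lie algebra over a field of characteristic zero, with basis $z_1,\dots,z_m$ of the center $\mathfrak z$ and $T_i$ as below. Suppose given: (a) a linear map $\delta_{\mathfrak z}:\mathfrak z\to\Lambda^2\mathfrak z$ satisfying co-Jacobi; write $\delta_{\mathfrak z}(z_i)=\sum_{a<b}c_i^{ab}z_a\wedge z_b$; (b) linear maps $D^1,\dots,D^m:W\to W$ with $[D^a,D^b]=\sum_ic_i^{ab}D^i$ for all $a<b$, and such that for all $x,y\in W$ $$\sum_iT_i(x)(y)\,\delta_{\mathfrak z}(z_i)=\sum_{i,j}\big(T_i(D^jx)(y)+T_i(x)(D^jy)\big)z_i\wedge z_j;$$ (c) a linear map $\varphi:W\to\Lambda^2\mathfrak z$, $\varphi(v)=\sum_{a<b}\varphi_{ab}(v)z_a\wedge z_b$, such that for all $v\in W$ $$\sum_i\varphi(D^iv)\wedge z_i+\sum_{a<b}\varphi_{ab}(v)\big(\delta_{\mathfrak z}(z_a)\wedge z_b-z_a\wedge\delta_{\mathfrak z}(z_b)\big)=0\in\Lambda^3\mathfrak z.$$ Then the linear map $\delta:\mathfrak n\to\Lambda^2\mathfrak n$ given by $\delta(z)=\delta_{\mathfrak z}(z)$ for $z\in\mathfrak z$ and $\delta(v)=\sum_iD^i(v)\wedge z_i+\varphi(v)$ for $v\in W$ is a Lie bialgebra structure on $\mathfrak n$.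
   Context: $W$ is a linear complement of $\mathfrak z$; $T_i:W\to W^*$ is defined by $[v,w]=\sum_iT_i(v)(w)z_i$. A Lie bialgebra structure is a linear $\delta:\mathfrak n\to\Lambda^2\mathfrak n$ satisfying co-Jacobi ($\delta(x_1)\wedge x_2-x_1\wedge\delta(x_2)=0$ in $\Lambda^3$, Sweedler notation $\delta(x)=x_1\wedge x_2$) and the 1-cocycle condition $\delta[x,y]=[\delta x,y]+[x,\delta y]$. (In the paper, condition (b) on the commutators is phrased as: $f\mapsto-\sum_if(z_i)D^i$ is a Lie algebra map $\mathfrak z^*\to\mathrm{End}(W)$ for the bracket dual to $\delta_{\mathfrak z}$; condition (c) as: the transpose $\Lambda^2\mathfrak z^*\to W^*$ of $\varphi$ is a 2-cocycle with values in $W^*$.) *)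

theory Defs
  imports Main
begin

text \<open>A vector space with finite basis indexed by type 'i is modelled as 'i => 'a.
  Lambda^2 is modelled by alternating 2-tensors 'i => 'i => 'a, Lambda^3 by
  alternating 3-tensors, with x wedge y = x (x) y - y (x) x, so that
  sum_{p<q} w p q e_p wedge e_q = w for alternating w.\<close>

definition basis_vec :: "'i \<Rightarrow> 'i \<Rightarrow> 'a::{zero,one}" where
  "basis_vec k = (\<lambda>j. if j = k then 1 else 0)"

definition alt2 :: "('i \<Rightarrow> 'i \<Rightarrow> 'a::comm_ring) \<Rightarrow> bool" where
  "alt2 w \<longleftrightarrow> (\<forall>p q. w p q = - w q p)"

definition wedge11 :: "('i \<Rightarrow> 'a::comm_ring) \<Rightarrow> ('i \<Rightarrow> 'a) \<Rightarrow> 'i \<Rightarrow> 'i \<Rightarrow> 'a" where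
  "wedge11 x y = (\<lambda>p q. x p * y q - x q * y p)"

definition wedge21 :: "('i \<Rightarrow> 'i \<Rightarrow> 'a::comm_ring) \<Rightarrow> ('i \<Rightarrow> 'a) \<Rightarrow> 'i \<Rightarrow> 'i \<Rightarrow> 'i \<Rightarrow> 'a" where
  "wedge21 w x = (\<lambda>p q r. w p q * x r + w q r * x p + w r p * x q)"

definition wedge12 :: "('i \<Rightarrow> 'a::comm_ring) \<Rightarrow> ('i \<Rightarrow> 'i \<Rightarrow> 'a) \<Rightarrow> 'i \<Rightarrow> 'i \<Rightarrow> 'i \<Rightarrow> 'a" where
  "wedge12 x w = (\<lambda>p q r. x p * w q r + x q * w r p + x r * w p q)"

text \<open>Co-Jacobi expression delta(x_1) wedge x_2 - x_1 wedge delta(x_2) in Sweedler notation: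
  delta x = sum_{s,t} (delta x s t / 2) e_s wedge e_t.\<close>
definition cojac :: "(('i::finite \<Rightarrow> 'a::field) \<Rightarrow> 'i \<Rightarrow> 'i \<Rightarrow> 'a) \<Rightarrow> ('i \<Rightarrow> 'a) \<Rightarrow> 'i \<Rightarrow> 'i \<Rightarrow> 'i \<Rightarrow> 'a" where
  "cojac \<delta> x = (\<lambda>p q r. \<Sum>s\<in>UNIV. \<Sum>t\<in>UNIV. (\<delta> x s t / 2) *
      (wedge21 (\<delta> (basis_vec s)) (basis_vec t) p q r - wedge12 (basis_vec s) (\<delta> (basis_vec t)) p q r))"

text \<open>Extension of a linear map L (given as a function) to Lambda^2 as a derivation:
  L(a wedge b) = L a wedge b + a wedge L b.\<close>
definition ext2 :: "(('i::finite \<Rightarrow> 'a::comm_ring_1) \<Rightarrow> ('i \<Rightarrow> 'a)) \<Rightarrow> ('i \<Rightarrow> 'i \<Rightarrow> 'a) \<Rightarrow> 'i \<Rightarrow> 'i \<Rightarrow> 'a" where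
  "ext2 L w = (\<lambda>r s. (\<Sum>p\<in>UNIV. L (basis_vec p) r * w p s) + (\<Sum>q\<in>UNIV. L (basis_vec q) s * w r q))"

definition lie_bialgebra ::
  "(('i::finite \<Rightarrow> 'a::field) \<Rightarrow> ('i \<Rightarrow> 'a) \<Rightarrow> ('i \<Rightarrow> 'a)) \<Rightarrow> (('i \<Rightarrow> 'a) \<Rightarrow> 'i \<Rightarrow> 'i \<Rightarrow> 'a) \<Rightarrow> bool" where
  "lie_bialgebra br \<delta> \<longleftrightarrow>
     (\<forall>x y. \<delta> (\<lambda>k. x k + y k) = (\<lambda>p q. \<delta> x p q + \<delta> y p q)) \<and>
     (\<forall>c x. \<delta> (\<lambda>k. c * x k) = (\<lambda>p q. c * \<delta> x p q)) \<and>
     (\<forall>x. alt2 (\<delta> x)) \<and>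
     (\<forall>x. cojac \<delta> x = (\<lambda>p q r. 0)) \<and>
     (\<forall>x y. \<delta> (br x y) = (\<lambda>r s. ext2 (\<lambda>u. br u y) (\<delta> x) r s + ext2 (\<lambda>u. br x u) (\<delta> y) r s))"

text \<open>T i p q : matrix of the bilinear form T_i on W; T_i(v)(w) = Tf T i v w.\<close>
definition Tf :: "('z \<Rightarrow> 'w::finite \<Rightarrow> 'w \<Rightarrow> 'a::comm_ring) \<Rightarrow> 'z \<Rightarrow> ('w \<Rightarrow> 'a) \<Rightarrow> ('w \<Rightarrow> 'a) \<Rightarrow> 'a" where
  "Tf T i v w = (\<Sum>p\<in>UNIV. \<Sum>q\<in>UNIV. v p * w q * T i p q)"

text \<open>D j p q : matrix of D^j : W -> W.\<close>
definition Dap :: "('z \<Rightarrow> 'w::finite \<Rightarrow> 'w \<Rightarrow> 'a::comm_ring) \<Rightarrow> 'z \<Rightarrow> ('w \<Rightarrow> 'a) \<Rightarrow> 'w \<Rightarrow> 'a" where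
  "Dap D j v = (\<lambda>p. \<Sum>q\<in>UNIV. D j p q * v q)"

definition Wpart :: "('w + 'z \<Rightarrow> 'a) \<Rightarrow> 'w \<Rightarrow> 'a" where
  "Wpart x = (\<lambda>p. x (Inl p))"

definition Zpart :: "('w + 'z \<Rightarrow> 'a) \<Rightarrow> 'z \<Rightarrow> 'a" where
  "Zpart x = (\<lambda>i. x (Inr i))"

definition embW :: "('w \<Rightarrow> 'a::zero) \<Rightarrow> 'w + 'z \<Rightarrow> 'a" where
  "embW v = (\<lambda>k. case k of Inl p \<Rightarrow> v p | Inr _ \<Rightarrow> 0)"

definition embZ2 :: "('z \<Rightarrow> 'z \<Rightarrow> 'a::zero) \<Rightarrow> 'w + 'z \<Rightarrow> 'w + 'z \<Rightarrow> 'a" where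
  "embZ2 w = (\<lambda>r s. case (r, s) of (Inr a, Inr b) \<Rightarrow> w a b | _ \<Rightarrow> 0)"

definition linext2 :: "('i \<Rightarrow> 'j \<Rightarrow> 'j \<Rightarrow> 'a::comm_ring) \<Rightarrow> ('i::finite \<Rightarrow> 'a) \<Rightarrow> 'j \<Rightarrow> 'j \<Rightarrow> 'a" where
  "linext2 f x = (\<lambda>a b. \<Sum>k\<in>UNIV. x k * f k a b)"

definition nbr :: "('z::finite \<Rightarrow> 'w::finite \<Rightarrow> 'w \<Rightarrow> 'a::comm_ring) \<Rightarrow> ('w + 'z \<Rightarrow> 'a) \<Rightarrow> ('w + 'z \<Rightarrow> 'a) \<Rightarrow> 'w + 'z \<Rightarrow> 'a" where
  "nbr T x y = (\<lambda>k. case k of Inl _ \<Rightarrow> 0 | Inr i \<Rightarrow> Tf T i (Wpart x) (Wpart y))"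

definition delta_n ::
  "('z::finite \<Rightarrow> 'z \<Rightarrow> 'z \<Rightarrow> 'a::comm_ring_1) \<Rightarrow> ('z \<Rightarrow> 'w::finite \<Rightarrow> 'w \<Rightarrow> 'a) \<Rightarrow> ('w \<Rightarrow> 'z \<Rightarrow> 'z \<Rightarrow> 'a)
    \<Rightarrow> ('w + 'z \<Rightarrow> 'a) \<Rightarrow> 'w + 'z \<Rightarrow> 'w + 'z \<Rightarrow> 'a" where
  "delta_n dz D phi x = (\<lambda>r s.
      embZ2 (linext2 dz (Zpart x)) r s
    + (\<Sum>i\<in>UNIV. wedge11 (embW (Dap D i (Wpart x))) (basis_vec (Inr i)) r s)
    + embZ2 (linext2 phi (Wpart x)) r s)"

end

theory Submission imports Defs begin

lemma sumP: "(\<Sum>s\<in>(UNIV::('w::finite + 'z::finite) set). g s) = (\<Sum>w\<in>UNIV. g (Inl w)) + (\<Sum>k\<in>UNIV. g (Inr k))"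
  by (subst UNIV_Plus_UNIV[symmetric], subst sum.Plus) (auto simp: o_def)

lemma ite_simps:
  "\<And>x::'a::comm_ring_1. x * (if P then 1 else 0) = (if P then x else 0)"
  "\<And>x::'a::comm_ring_1. (if P then 1 else 0) * x = (if P then x else 0)"
  "\<And>x y::'a::comm_ring_1. (if P then x else 0) * y = (if P then x * y else 0)"
  "\<And>x y::'a::comm_ring_1. y * (if P then x else 0) = (if P then y * x else 0)"
  by auto

lemma ite_div: "\<And>x y::'a::field. (if P then x else 0) / y = (if P then x / y else 0)"
  by auto

lemma bv_app: "basis_vec k j = (if j = k then 1 else 0)" by (simp add: basis_vec_def)

lemma cojac_formula:
  fixes \<delta> :: "('i::finite \<Rightarrow> 'a::field_char_0) \<Rightarrow> 'i \<Rightarrow> 'i \<Rightarrow> 'a"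
  assumes alt: "alt2 (\<delta> x)"
  shows "cojac \<delta> x p q r = (\<Sum>s\<in>UNIV. \<delta> x s r * \<delta> (basis_vec s) p q + \<delta> x s p * \<delta> (basis_vec s) q r
      + \<delta> x s q * \<delta> (basis_vec s) r p)"
proof -
  have a: "\<And>s t. \<delta> x s t = - \<delta> x t s" using alt unfolding alt2_def by blast
  have "cojac \<delta> x p q r = (\<Sum>s\<in>UNIV. \<Sum>t\<in>UNIV. (\<delta> x s t / 2) * (\<delta> (basis_vec s) p q * basis_vec t r
     + \<delta> (basis_vec s) q r * basis_vec t p + \<delta> (basis_vec s) r p * basis_vec t q))
   - (\<Sum>s\<in>UNIV. \<Sum>t\<in>UNIV. (\<delta> x s t / 2) * (basis_vec s p * \<delta> (basis_vec t) q r + basis_vec s q * \<delta> (basis_vec t) r p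
     + basis_vec s r * \<delta> (basis_vec t) p q))"
    unfolding cojac_def wedge21_def wedge12_def
    by (simp add: sum_subtractf[symmetric] right_diff_distrib)
  also have "(\<Sum>s\<in>UNIV. \<Sum>t\<in>UNIV. (\<delta> x s t / 2) * (\<delta> (basis_vec s) p q * basis_vec t r
     + \<delta> (basis_vec s) q r * basis_vec t p + \<delta> (basis_vec s) r p * basis_vec t q))
     = (\<Sum>s\<in>UNIV. (\<delta> x s r / 2) * \<delta> (basis_vec s) p q + (\<delta> x s p / 2) * \<delta> (basis_vec s) q r + (\<delta> x s q / 2) * \<delta> (basis_vec s) r p)"
    apply (rule sum.cong, simp)
    apply (simp add: distrib_left sum.distrib)
    apply (simp add: bv_app[of _ r] bv_app[of _ p] bv_app[of _ q] ite_simps ite_div)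
    done
  also have "(\<Sum>s\<in>UNIV. \<Sum>t\<in>UNIV. (\<delta> x s t / 2) * (basis_vec s p * \<delta> (basis_vec t) q r + basis_vec s q * \<delta> (basis_vec t) r p
     + basis_vec s r * \<delta> (basis_vec t) p q))
     = (\<Sum>t\<in>UNIV. (\<delta> x p t / 2) * \<delta> (basis_vec t) q r + (\<delta> x q t / 2) * \<delta> (basis_vec t) r p + (\<delta> x r t / 2) * \<delta> (basis_vec t) p q)"
    apply (subst sum.swap)
    apply (rule sum.cong, simp)
    apply (simp add: distrib_left sum.distrib)
    apply (simp add: bv_app[of _ r] bv_app[of _ p] bv_app[of _ q] ite_simps ite_div)
    done
  finally show ?thesis
    apply (simp add: a[of p] a[of q] a[of r] sum_subtractf[symmetric])
    apply (rule sum.cong, simp)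
    apply (simp add: algebra_simps)
    done
qed

lemma dn_LL[simp]: "delta_n dz D phi x (Inl p) (Inl q) = 0"
  by (simp add: delta_n_def embZ2_def wedge11_def embW_def bv_app)
lemma dn_LR[simp]: "delta_n dz D phi x (Inl p) (Inr j) = Dap D j (Wpart x) p"
  by (simp add: delta_n_def embZ2_def wedge11_def embW_def bv_app ite_simps sum_negf cong: if_cong)
lemma dn_RL[simp]: "delta_n dz D phi x (Inr j) (Inl p) = - Dap D j (Wpart x) p"
  by (simp add: delta_n_def embZ2_def wedge11_def embW_def bv_app ite_simps sum_negf cong: if_cong)
lemma dn_RR[simp]: "delta_n dz D phi x (Inr a) (Inr b) = linext2 dz (Zpart x) a b + linext2 phi (Wpart x) a b"
  by (simp add: delta_n_def embZ2_def wedge11_def embW_def bv_app ite_simps sum_negf cong: if_cong)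

lemma Wpart_bL[simp]: "Wpart (basis_vec (Inl w)) = basis_vec w"
  by (auto simp: Wpart_def basis_vec_def)
lemma Wpart_bR[simp]: "Wpart (basis_vec (Inr w)) = (\<lambda>_. 0)"
  by (auto simp: Wpart_def basis_vec_def)
lemma Zpart_bL[simp]: "Zpart (basis_vec (Inl w)) = (\<lambda>_. 0)"
  by (auto simp: Zpart_def basis_vec_def)
lemma Zpart_bR[simp]: "Zpart (basis_vec (Inr w)) = basis_vec w"
  by (auto simp: Zpart_def basis_vec_def)
lemma Dap_b[simp]: "Dap D i (basis_vec w) p = (D i p w :: 'a::field)"
  by (simp add: Dap_def bv_app ite_simps)
lemma Dap_0[simp]: "Dap D i (\<lambda>_. 0) p = (0::'a::field)"
  by (simp add: Dap_def)
lemma linext2_b[simp]: "linext2 f (basis_vec k) a b = (f k a b :: 'a::field)"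
  by (simp add: linext2_def bv_app ite_simps)
lemma linext2_0[simp]: "linext2 f (\<lambda>_. 0) a b = (0 :: 'a::field)"
  by (simp add: linext2_def)
lemma linext2_fold: "(\<Sum>k\<in>UNIV. x k * f k a b) = linext2 f x a b"
  by (simp add: linext2_def)
lemma Dap_fold: "(\<Sum>w\<in>UNIV. Dap D b v w * D a p w) = Dap D a (Dap D b v) p"
  unfolding Dap_def[of D a] by (rule sum.cong) (simp_all add: mult.commute)

lemma wedge12_21: "wedge12 x w = wedge21 w x"
  unfolding wedge12_def wedge21_def by (auto simp: algebra_simps)

lemma half_sum:
  fixes h g :: "'z::{finite,linorder} \<Rightarrow> 'z \<Rightarrow> 'a::field_char_0"
  assumes h: "\<And>a b. h a b = - h b a"
  shows "(\<Sum>a\<in>UNIV. \<Sum>b\<in>UNIV. if a < b then h a b * (g a b - g b a) else 0) = (\<Sum>a\<in>UNIV. \<Sum>b\<in>UNIV. h a b * g a b)"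
proof -
  define F where "F a b = h a b * (g a b - g b a)" for a b
  have Fs: "F a b = F b a" for a b unfolding F_def using h[of a b] by (simp add: algebra_simps)
  have Fa: "F a a = 0" for a unfolding F_def by simp
  have split: "F a b = (if a < b then F a b else 0) + (if b < a then F a b else 0)" for a b
    using Fa[of a] by (cases a b rule: linorder_cases) auto
  define S where "S = (\<Sum>a\<in>UNIV. \<Sum>b\<in>UNIV. if a < b then F a b else 0)"
  have S2: "(\<Sum>a\<in>UNIV. \<Sum>b\<in>UNIV. if b < a then F a b else 0) = S"
    unfolding S_def apply (subst sum.swap)
    apply (rule sum.cong[OF refl])+
    apply (subst Fs) apply (rule refl) done
  have "(\<Sum>a\<in>UNIV. \<Sum>b\<in>UNIV. F a b) = 2 * S"
    apply (subst split)
    apply (simp only: sum.distrib S2)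
    apply (simp add: S_def)
    done
  moreover have "(\<Sum>a\<in>UNIV. \<Sum>b\<in>UNIV. F a b) = 2 * (\<Sum>a\<in>UNIV. \<Sum>b\<in>UNIV. h a b * g a b)"
  proof -
    have "(\<Sum>a\<in>UNIV. \<Sum>b\<in>UNIV. h a b * g b a) = (\<Sum>a\<in>UNIV. \<Sum>b\<in>UNIV. h b a * g a b)"
      by (subst sum.swap) simp
    also have "\<dots> = - (\<Sum>a\<in>UNIV. \<Sum>b\<in>UNIV. h a b * g a b)"
    proof -
      have "(\<Sum>a\<in>UNIV. \<Sum>b\<in>UNIV. h b a * g a b) = (\<Sum>a\<in>UNIV. \<Sum>b\<in>UNIV. - (h a b * g a b))"
        by (intro sum.cong refl) (metis h mult_minus_left)
      then show ?thesis by (simp add: sum_negf)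
    qed
    finally show ?thesis unfolding F_def
      by (simp add: right_diff_distrib sum_subtractf)
  qed
  ultimately show ?thesis unfolding S_def F_def by simp
qed


lemma linext2_alt: assumes "\<And>k. alt2 (f k)" shows "alt2 (linext2 f (x::'i::finite \<Rightarrow> 'a::comm_ring_1))"
  unfolding alt2_def linext2_def
proof (intro allI)
  fix p q
  have a: "f k p q = - f k q p" for k using assms unfolding alt2_def by blast
  have "(\<Sum>k\<in>UNIV. x k * f k p q) = (\<Sum>k\<in>UNIV. - (x k * f k q p))"
    by (intro sum.cong refl) (metis a mult_minus_right)
  then show "(\<Sum>k\<in>UNIV. x k * f k p q) = - (\<Sum>k\<in>UNIV. x k * f k q p)" by (simp add: sum_negf)
qed

lemma dn_alt:
  fixes dz :: "'z::finite \<Rightarrow> 'z \<Rightarrow> 'z \<Rightarrow> 'a::field_char_0" and phi :: "'w::finite \<Rightarrow> 'z \<Rightarrow> 'z \<Rightarrow> 'a"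
  assumes "\<And>i. alt2 (dz i)" "\<And>p. alt2 (phi p)"
  shows "alt2 (delta_n dz D phi x)"
proof -
  have 1: "linext2 dz y a b = - linext2 dz y b a" for y a b
    using linext2_alt[of dz y, OF assms(1)] unfolding alt2_def by blast
  have 2: "linext2 phi y a b = - linext2 phi y b a" for y a b
    using linext2_alt[of phi y, OF assms(2)] unfolding alt2_def by blast
  show ?thesis unfolding alt2_def
  proof (intro allI)
    fix p q :: "'w + 'z"
    show "delta_n dz D phi x p q = - delta_n dz D phi x q p"
      apply (cases p; cases q)
         apply simp_all
      subgoal for b ba using 1[of "Zpart x" b ba] 2[of "Wpart x" b ba] by simp
      done
  qed
qed


lemma K_lemma:
  fixes dz :: "'z::{finite,linorder} \<Rightarrow> 'z \<Rightarrow> 'z \<Rightarrow> 'a::field_char_0" and D :: "'z \<Rightarrow> 'w::finite \<Rightarrow> 'w \<Rightarrow> 'a"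
  assumes dz_alt: "\<And>i. alt2 (dz i)"
    and D_comm: "\<And>a b v. a < b \<Longrightarrow>
        (\<lambda>p. Dap D a (Dap D b v) p - Dap D b (Dap D a v) p) = (\<lambda>p. \<Sum>i\<in>UNIV. dz i a b * Dap D i v p)"
  shows "(\<Sum>w\<in>UNIV. Dap D b v w * D a p w - Dap D a v w * D b p w) + (\<Sum>k\<in>UNIV. - (Dap D k v p * dz k a b)) = 0"
proof -
  have da: "dz k a b = - dz k b a" for k a b using dz_alt[of k] unfolding alt2_def by blast
  have "Dap D a (Dap D b v) p - Dap D b (Dap D a v) p = (\<Sum>k\<in>UNIV. Dap D k v p * dz k a b)"
  proof (cases a b rule: linorder_cases)
    case less
    from fun_cong[OF D_comm[OF less, of v], of p] show ?thesis by (simp add: mult.commute)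
  next
    case equal
    have "dz k a a = 0" for k using da[of k a a] by simp
    then show ?thesis using equal by simp
  next
    case greater
    have e: "Dap D b (Dap D a v) p - Dap D a (Dap D b v) p = (\<Sum>i\<in>UNIV. dz i b a * Dap D i v p)"
      using fun_cong[OF D_comm[OF greater, of v], of p] by simp
    have "(\<Sum>k\<in>UNIV. Dap D k v p * dz k a b) = - (\<Sum>i\<in>UNIV. dz i b a * Dap D i v p)"
      by (simp add: da[of _ a b] sum_negf[symmetric] mult.commute)
    then show ?thesis using e by (metis minus_diff_eq)
  qed
  then show ?thesis
    by (simp add: sum_subtractf sum_negf Dap_fold)
qed

lemma E1_lemma:
  fixes dz :: "'z::{finite,linorder} \<Rightarrow> 'z \<Rightarrow> 'z \<Rightarrow> 'a::field_char_0"
  assumes dz_alt: "\<And>i. alt2 (dz i)"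
    and dz_cojac: "\<And>x. cojac (linext2 dz) x = (\<lambda>a b c. 0)"
  shows "(\<Sum>k\<in>UNIV. linext2 dz z k c * dz k a b + linext2 dz z k a * dz k b c + linext2 dz z k b * dz k c a) = 0"
proof -
  have "cojac (linext2 dz) z a b c = 0" using dz_cojac by simp
  then show ?thesis
    by (subst (asm) cojac_formula[OF linext2_alt[OF dz_alt]]) simp
qed

lemma E2_lemma:
  fixes dz :: "'z::{finite,linorder} \<Rightarrow> 'z \<Rightarrow> 'z \<Rightarrow> 'a::field_char_0" and D :: "'z \<Rightarrow> 'w::finite \<Rightarrow> 'w \<Rightarrow> 'a"
    and phi :: "'w \<Rightarrow> 'z \<Rightarrow> 'z \<Rightarrow> 'a"
  assumes phi_alt: "\<And>p. alt2 (phi p)"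
    and phi_cond: "\<And>v. (\<lambda>a b c.
          (\<Sum>i\<in>UNIV. wedge21 (linext2 phi (Dap D i v)) (basis_vec i) a b c)
        + (\<Sum>a'\<in>UNIV. \<Sum>b'\<in>UNIV. if a' < b' then linext2 phi v a' b' *
             (wedge21 (dz a') (basis_vec b') a b c - wedge12 (basis_vec a') (dz b') a b c) else 0))
        = (\<lambda>a b c. 0)"
  shows "linext2 phi (Dap D c v) a b + linext2 phi (Dap D a v) b c + linext2 phi (Dap D b v) c a
     + (\<Sum>k\<in>UNIV. linext2 phi v k c * dz k a b + linext2 phi v k a * dz k b c + linext2 phi v k b * dz k c a) = 0"
proof -
  have h: "linext2 phi v x y = - linext2 phi v y x" for x y
    using linext2_alt[of phi v] phi_alt unfolding alt2_def by blast
  have P: "(\<Sum>i\<in>UNIV. wedge21 (linext2 phi (Dap D i v)) (basis_vec i) a b c)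
     = linext2 phi (Dap D c v) a b + linext2 phi (Dap D a v) b c + linext2 phi (Dap D b v) c a"
    by (simp add: wedge21_def sum.distrib bv_app ite_simps cong: if_cong)
  have Q: "(\<Sum>a'\<in>UNIV. \<Sum>b'\<in>UNIV. if a' < b' then linext2 phi v a' b' *
             (wedge21 (dz a') (basis_vec b') a b c - wedge12 (basis_vec a') (dz b') a b c) else 0)
     = (\<Sum>a'\<in>UNIV. \<Sum>b'\<in>UNIV. linext2 phi v a' b' * wedge21 (dz a') (basis_vec b') a b c)"
    unfolding wedge12_21 by (rule half_sum[OF h])
  have Q2: "(\<Sum>a'\<in>UNIV. \<Sum>b'\<in>UNIV. linext2 phi v a' b' * wedge21 (dz a') (basis_vec b') a b c)
     = (\<Sum>k\<in>UNIV. linext2 phi v k c * dz k a b + linext2 phi v k a * dz k b c + linext2 phi v k b * dz k c a)"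
    by (simp add: wedge21_def sum.distrib distrib_left bv_app ite_simps cong: if_cong)
  from fun_cong[OF fun_cong[OF fun_cong[OF phi_cond[of v], of a], of b], of c]
  show ?thesis using P Q Q2 by simp
qed

lemma dn_cojac:
  fixes T :: "'z::{finite,linorder} \<Rightarrow> 'w::finite \<Rightarrow> 'w \<Rightarrow> 'a::field_char_0"
    and dz :: "'z \<Rightarrow> 'z \<Rightarrow> 'z \<Rightarrow> 'a"
    and D :: "'z \<Rightarrow> 'w \<Rightarrow> 'w \<Rightarrow> 'a"
    and phi :: "'w \<Rightarrow> 'z \<Rightarrow> 'z \<Rightarrow> 'a"
  assumes dz_alt: "\<And>i. alt2 (dz i)"
    and dz_cojac: "\<And>x. cojac (linext2 dz) x = (\<lambda>a b c. 0)"
    and D_comm: "\<And>a b v. a < b \<Longrightarrow>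
        (\<lambda>p. Dap D a (Dap D b v) p - Dap D b (Dap D a v) p) = (\<lambda>p. \<Sum>i\<in>UNIV. dz i a b * Dap D i v p)"
    and phi_alt: "\<And>p. alt2 (phi p)"
    and phi_cond: "\<And>v. (\<lambda>a b c.
          (\<Sum>i\<in>UNIV. wedge21 (linext2 phi (Dap D i v)) (basis_vec i) a b c)
        + (\<Sum>a'\<in>UNIV. \<Sum>b'\<in>UNIV. if a' < b' then linext2 phi v a' b' *
             (wedge21 (dz a') (basis_vec b') a b c - wedge12 (basis_vec a') (dz b') a b c) else 0))
        = (\<lambda>a b c. 0)"
  shows "cojac (delta_n dz D phi) x p q r = 0"
proof -
  have alt: "alt2 (delta_n dz D phi y)" for y using dn_alt dz_alt phi_alt by blast
  note K = K_lemma[OF dz_alt D_comm]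
  show ?thesis
    apply (subst cojac_formula[OF alt])
    apply (simp add: sumP)
    apply (cases p; cases q; cases r)
    apply (simp_all add: K)
    subgoal for b ba bb
    proof -
      have e1: "(\<Sum>k\<in>UNIV. linext2 dz (Zpart x) k bb * dz k b ba + linext2 dz (Zpart x) k b * dz k ba bb
          + linext2 dz (Zpart x) k ba * dz k bb b) = 0"
        by (rule E1_lemma[OF dz_alt dz_cojac])
      have e2: "linext2 phi (Dap D bb (Wpart x)) b ba + linext2 phi (Dap D b (Wpart x)) ba bb
          + linext2 phi (Dap D ba (Wpart x)) bb b
          + (\<Sum>k\<in>UNIV. linext2 phi (Wpart x) k bb * dz k b ba + linext2 phi (Wpart x) k b * dz k ba bb
          + linext2 phi (Wpart x) k ba * dz k bb b) = 0"
        by (rule E2_lemma[OF phi_alt phi_cond])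
      have "(\<Sum>w\<in>UNIV.
              Dap D bb (Wpart x) w * phi w b ba +
              Dap D b (Wpart x) w * phi w ba bb +
              Dap D ba (Wpart x) w * phi w bb b) +
           (\<Sum>k\<in>UNIV.
              (linext2 dz (Zpart x) k bb + linext2 phi (Wpart x) k bb) *
              dz k b ba +
              (linext2 dz (Zpart x) k b + linext2 phi (Wpart x) k b) *
              dz k ba bb +
              (linext2 dz (Zpart x) k ba + linext2 phi (Wpart x) k ba) *
              dz k bb b)
        = (\<Sum>k\<in>UNIV. linext2 dz (Zpart x) k bb * dz k b ba + linext2 dz (Zpart x) k b * dz k ba bb
          + linext2 dz (Zpart x) k ba * dz k bb b) +
          (linext2 phi (Dap D bb (Wpart x)) b ba + linext2 phi (Dap D b (Wpart x)) ba bb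
          + linext2 phi (Dap D ba (Wpart x)) bb b
          + (\<Sum>k\<in>UNIV. linext2 phi (Wpart x) k bb * dz k b ba + linext2 phi (Wpart x) k b * dz k ba bb
          + linext2 phi (Wpart x) k ba * dz k bb b))"
        unfolding linext2_def[of phi "Dap D _ _"]
        by (simp only: distrib_right sum.distrib add_ac)
      then show ?thesis using e1 e2 by simp
    qed
    done
qed


lemma Tf_l1: "Tf T i v y = (\<Sum>p\<in>UNIV. v p * (\<Sum>q\<in>UNIV. y q * T i p q))"
  unfolding Tf_def by (simp add: sum_distrib_left mult.assoc)
lemma Tf_l2: "Tf T i x v = (\<Sum>q\<in>UNIV. v q * (\<Sum>p\<in>UNIV. x p * T i p q))"
  unfolding Tf_def by (subst sum.swap) (simp add: sum_distrib_left ac_simps)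
lemma Tf_b1: "(\<Sum>w\<in>UNIV. Tf T i (basis_vec w) y * c w) = (Tf T i c y :: 'a::field)"
  unfolding Tf_l1[of T i _ y] by (simp add: bv_app ite_simps mult.commute cong: if_cong)
lemma Tf_b2: "(\<Sum>w\<in>UNIV. Tf T i x (basis_vec w) * c w) = (Tf T i x c :: 'a::field)"
  unfolding Tf_l2[of T i x] by (simp add: bv_app ite_simps mult.commute cong: if_cong)
lemma Tf_01[simp]: "Tf T i (\<lambda>_. 0) y = (0 :: 'a::field)" by (simp add: Tf_def)
lemma Tf_02[simp]: "Tf T i x (\<lambda>_. 0) = (0 :: 'a::field)" by (simp add: Tf_def)

lemma nbr_L[simp]: "nbr T x y (Inl p) = 0" by (simp add: nbr_def)
lemma nbr_R[simp]: "nbr T x y (Inr i) = Tf T i (Wpart x) (Wpart y)" by (simp add: nbr_def)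
lemma Wpart_nbr[simp]: "Wpart (nbr T x y) = (\<lambda>_. 0)" by (simp add: nbr_def Wpart_def)
lemma Zpart_nbr[simp]: "Zpart (nbr T x y) = (\<lambda>i. Tf T i (Wpart x) (Wpart y))" by (simp add: nbr_def Zpart_def)

lemma dn_cocycle:
  fixes T :: "'z::{finite,linorder} \<Rightarrow> 'w::finite \<Rightarrow> 'w \<Rightarrow> 'a::field_char_0"
    and dz :: "'z \<Rightarrow> 'z \<Rightarrow> 'z \<Rightarrow> 'a"
    and D :: "'z \<Rightarrow> 'w \<Rightarrow> 'w \<Rightarrow> 'a"
    and phi :: "'w \<Rightarrow> 'z \<Rightarrow> 'z \<Rightarrow> 'a"
  assumes D_T: "\<And>x y. (\<lambda>a b. \<Sum>i\<in>UNIV. Tf T i x y * dz i a b) =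
        (\<lambda>a b. \<Sum>i\<in>UNIV. \<Sum>j\<in>UNIV.
           (Tf T i (Dap D j x) y + Tf T i x (Dap D j y)) * wedge11 (basis_vec i) (basis_vec j) a b)"
  shows "delta_n dz D phi (nbr T x y) r s = ext2 (\<lambda>u. nbr T u y) (delta_n dz D phi x) r s + ext2 (\<lambda>u. nbr T x u) (delta_n dz D phi y) r s"
proof (cases r; cases s)
  fix a b assume rs: "r = Inr a" "s = Inr b"
  have dt: "(\<Sum>i\<in>UNIV. Tf T i (Wpart x) (Wpart y) * dz i a b) =
     Tf T a (Dap D b (Wpart x)) (Wpart y) + Tf T a (Wpart x) (Dap D b (Wpart y))
     - (Tf T b (Dap D a (Wpart x)) (Wpart y) + Tf T b (Wpart x) (Dap D a (Wpart y)))"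
    using fun_cong[OF fun_cong[OF D_T[of "Wpart x" "Wpart y"], of a], of b]
    by (simp add: wedge11_def bv_app ite_simps right_diff_distrib sum_subtractf cong: if_cong)
  show ?thesis using rs dt
    apply (simp add: ext2_def sumP sum_negf Tf_b1 Tf_b2)
    apply (simp add: linext2_def)
    done
qed (simp_all add: ext2_def sumP)


lemma dn_add:
  fixes x y :: "'w::finite + 'z::finite \<Rightarrow> 'a::field_char_0"
  shows "delta_n dz D phi (\<lambda>k. x k + y k) = (\<lambda>p q. delta_n dz D phi x p q + delta_n dz D phi y p q :: 'a::field_char_0)"
proof (intro ext)
  fix p q :: "'w + 'z"
  show "delta_n dz D phi (\<lambda>k. x k + y k) p q = delta_n dz D phi x p q + delta_n dz D phi y p q"
    by (cases p; cases q) (simp_all add: Wpart_def Zpart_def Dap_def linext2_def sum.distrib algebra_simps)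
qed

lemma dn_scale:
  fixes x :: "'w::finite + 'z::finite \<Rightarrow> 'a::field_char_0"
  shows "delta_n dz D phi (\<lambda>k. c * x k) = (\<lambda>p q. c * delta_n dz D phi x p q :: 'a::field_char_0)"
proof (intro ext)
  fix p q :: "'w + 'z"
  show "delta_n dz D phi (\<lambda>k. c * x k) p q = c * delta_n dz D phi x p q"
    by (cases p; cases q) (simp_all add: Wpart_def Zpart_def Dap_def linext2_def sum_distrib_left algebra_simps)
qed

theorem mainTheorem6:
  fixes T :: "'z::{finite,linorder} \<Rightarrow> 'w::finite \<Rightarrow> 'w \<Rightarrow> 'a::field_char_0"
    and dz :: "'z \<Rightarrow> 'z \<Rightarrow> 'z \<Rightarrow> 'a"
    and D :: "'z \<Rightarrow> 'w \<Rightarrow> 'w \<Rightarrow> 'a"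
    and phi :: "'w \<Rightarrow> 'z \<Rightarrow> 'z \<Rightarrow> 'a"
  assumes T_alt: "\<And>i p q. T i p q = - T i q p"
    and center: "\<And>v. (\<forall>i w. Tf T i v w = 0) \<Longrightarrow> v = (\<lambda>p. 0)"
    and nonabelian: "\<exists>i p q. T i p q \<noteq> 0"
    and dz_alt: "\<And>i. alt2 (dz i)"
    and dz_cojac: "\<And>x. cojac (linext2 dz) x = (\<lambda>a b c. 0)"
    and D_comm: "\<And>a b v. a < b \<Longrightarrow>
        (\<lambda>p. Dap D a (Dap D b v) p - Dap D b (Dap D a v) p) = (\<lambda>p. \<Sum>i\<in>UNIV. dz i a b * Dap D i v p)"
    and D_T: "\<And>x y. (\<lambda>a b. \<Sum>i\<in>UNIV. Tf T i x y * dz i a b) =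
        (\<lambda>a b. \<Sum>i\<in>UNIV. \<Sum>j\<in>UNIV.
           (Tf T i (Dap D j x) y + Tf T i x (Dap D j y)) * wedge11 (basis_vec i) (basis_vec j) a b)"
    and phi_alt: "\<And>p. alt2 (phi p)"
    and phi_cond: "\<And>v. (\<lambda>a b c.
          (\<Sum>i\<in>UNIV. wedge21 (linext2 phi (Dap D i v)) (basis_vec i) a b c)
        + (\<Sum>a'\<in>UNIV. \<Sum>b'\<in>UNIV. if a' < b' then linext2 phi v a' b' *
             (wedge21 (dz a') (basis_vec b') a b c - wedge12 (basis_vec a') (dz b') a b c) else 0))
        = (\<lambda>a b c. 0)"
  shows "lie_bialgebra (nbr T) (delta_n dz D phi)"
proof -
  show ?thesis
    unfolding lie_bialgebra_def
  proof (intro conjI allI)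
    show "delta_n dz D phi (\<lambda>k. x k + y k) = (\<lambda>p q. delta_n dz D phi x p q + delta_n dz D phi y p q)" for x y
      by (rule dn_add)
    show "delta_n dz D phi (\<lambda>k. c * x k) = (\<lambda>p q. c * delta_n dz D phi x p q)" for c x
      by (rule dn_scale)
    show "alt2 (delta_n dz D phi x)" for x using dn_alt dz_alt phi_alt by blast
    show "cojac (delta_n dz D phi) x = (\<lambda>p q r. 0)" for x
      by (intro ext) (rule dn_cojac[OF dz_alt dz_cojac D_comm phi_alt phi_cond])
    show "delta_n dz D phi (nbr T x y) = (\<lambda>r s. ext2 (\<lambda>u. nbr T u y) (delta_n dz D phi x) r s
        + ext2 (nbr T x) (delta_n dz D phi y) r s)" for x y
      by (intro ext) (rule dn_cocycle[OF D_T])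
  qed
qed

end
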